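(* Let $f$ be a holomorphic quadratic self-map of $\mathbb{P}^2$ with an invariant line $\ell$ ($f(\ell)\subset\ell$), all of whose fixed points are isolated and simple. Then any three of the four fixed points of $f$ not lying on $\ell$ are not collinear.
   Context: A holomorphic quadratic self-map of $\mathbb{P}^2$ is given by three quadratic homogeneous polynomials without common nontrivial zeros; such a map with invariant line $\ell$ and isolated simple fixed points has exactly seven fixed points, three on $\ell$ and four off $\ell$. *)

theory Defs
  imports "HOL-Analysis.Analysis"
begin

text \<open>Homogeneous coordinates on P^2: nonzero vectors in complex^3.
A quadratic self-map is given by three quadratic forms
F_k(v) = sum_{i,j} C k i j * v_i * v_j.\<close>

definition quad_map :: "(3 \<Rightarrow> 3 \<Rightarrow> 3 \<Rightarrow> complex) \<Rightarrow> complex^3 \<Rightarrow> complex^3" where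
  "quad_map C v = (\<chi> k. \<Sum>i\<in>UNIV. \<Sum>j\<in>UNIV. C k i j * v$i * v$j)"

text \<open>Holomorphic self-map of P^2: no common nontrivial zero.\<close>
definition holo_quad :: "(3 \<Rightarrow> 3 \<Rightarrow> 3 \<Rightarrow> complex) \<Rightarrow> bool" where
  "holo_quad C \<longleftrightarrow> (\<forall>v::complex^3. v \<noteq> 0 \<longrightarrow> quad_map C v \<noteq> 0)"

definition proj_eq :: "complex^3 \<Rightarrow> complex^3 \<Rightarrow> bool" where
  "proj_eq v w \<longleftrightarrow> (\<exists>c. c \<noteq> 0 \<and> w = c *s v)"

definition is_fixed :: "(3 \<Rightarrow> 3 \<Rightarrow> 3 \<Rightarrow> complex) \<Rightarrow> complex^3 \<Rightarrow> bool" where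
  "is_fixed C v \<longleftrightarrow> v \<noteq> 0 \<and> (\<exists>\<mu>. quad_map C v = \<mu> *s v)"

text \<open>Isolated simple fixed point (multiplicity one): 1 is not an eigenvalue of df at [v].
In homogeneous coordinates, with F v = mu v, this means mu is not an eigenvalue of DF(v)
(DF(v) v = 2 mu v, and the other eigenvalues of DF(v)/mu are those of df).\<close>
definition simple_fixed :: "(3 \<Rightarrow> 3 \<Rightarrow> 3 \<Rightarrow> complex) \<Rightarrow> complex^3 \<Rightarrow> bool" where
  "simple_fixed C v \<longleftrightarrow> is_fixed C v \<and>
     (\<exists>L \<mu>. (quad_map C has_derivative L) (at v) \<and> quad_map C v = \<mu> *s v \<and>
            (\<forall>w. L w = \<mu> *s w \<longrightarrow> w = 0))"

definition lin_form :: "complex^3 \<Rightarrow> complex^3 \<Rightarrow> complex" where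
  "lin_form a v = (\<Sum>i\<in>UNIV. a$i * v$i)"

definition invariant_line :: "(3 \<Rightarrow> 3 \<Rightarrow> 3 \<Rightarrow> complex) \<Rightarrow> complex^3 \<Rightarrow> bool" where
  "invariant_line C a \<longleftrightarrow> a \<noteq> 0 \<and>
     (\<forall>v. v \<noteq> 0 \<longrightarrow> lin_form a v = 0 \<longrightarrow> lin_form a (quad_map C v) = 0)"

definition proj_collinear :: "complex^3 \<Rightarrow> complex^3 \<Rightarrow> complex^3 \<Rightarrow> bool" where
  "proj_collinear p q r \<longleftrightarrow>
     (\<exists>a. a \<noteq> 0 \<and> lin_form a p = 0 \<and> lin_form a q = 0 \<and> lin_form a r = 0)"

end

theory Submission
  imports Defs
begin

definition Sb :: "(3\<Rightarrow>3\<Rightarrow>3\<Rightarrow>complex) \<Rightarrow> complex^3 \<Rightarrow> complex^3 \<Rightarrow> complex^3" where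
"Sb C u v = (\<chi> k. \<Sum>i\<in>UNIV. \<Sum>j\<in>UNIV. C k i j * (u$i * v$j + v$i * u$j))"

lemma Q_comb: "quad_map C (s *s u + t *s v) = (s * s) *s quad_map C u + (s * t) *s Sb C u v + (t * t) *s quad_map C v"
  by (simp add: vec_eq_iff quad_map_def Sb_def sum_3 algebra_simps)

lemma Sb_lin: "Sb C u (s *s v + t *s w) = s *s Sb C u v + t *s Sb C u w"
  by (simp add: vec_eq_iff Sb_def sum_3 algebra_simps)

lemma Sb_self: "Sb C u u = 2 *s quad_map C u"
  by (simp add: vec_eq_iff Sb_def quad_map_def sum_3 algebra_simps)

lemma lin_lin: "lin_form a (s *s u + t *s v) = s * lin_form a u + t * lin_form a v"
  by (simp add: lin_form_def sum_3 algebra_simps)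

lemma scaleR_vs: "(t::real) *\<^sub>R (x::complex^3) = (of_real t :: complex) *s x"
  unfolding vec_eq_iff vector_scaleR_component vector_smult_component by (simp add: scaleR_conv_of_real)

lemma dir_deriv:
  assumes "(quad_map C has_derivative L) (at p)"
  shows "L w = Sb C p w"
proof -
  let ?g = "\<lambda>t::real. p + t *\<^sub>R w"
  have g: "(?g has_derivative (\<lambda>t. t *\<^sub>R w)) (at 0)"
    by (auto intro!: derivative_eq_intros)
  have d1: "((quad_map C \<circ> ?g) has_derivative (\<lambda>t. L (t *\<^sub>R w))) (at 0)"
  proof -
    have a2: "(quad_map C has_derivative L) (at (p + 0 *\<^sub>R w))" using assms by simp
    show ?thesis using has_derivative_compose[OF g a2] by (simp add: o_def)
  qed
  have eq: "(quad_map C \<circ> ?g) = (\<lambda>t. quad_map C p + t *\<^sub>R Sb C p w + (t^2) *\<^sub>R quad_map C w)"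
  proof
    fix t :: real
    have "(quad_map C \<circ> ?g) t = quad_map C (1 *s p + (of_real t :: complex) *s w)" by (simp add: scaleR_vs)
    also have "\<dots> = (1 * 1) *s quad_map C p + (1 * (of_real t :: complex)) *s Sb C p w + ((of_real t :: complex) * of_real t) *s quad_map C w" by (rule Q_comb)
    also have "\<dots> = quad_map C p + t *\<^sub>R Sb C p w + (t^2) *\<^sub>R quad_map C w" by (simp add: scaleR_vs power2_eq_square)
    finally show "(quad_map C \<circ> ?g) t = quad_map C p + t *\<^sub>R Sb C p w + (t^2) *\<^sub>R quad_map C w" .
  qed
  have d2: "((quad_map C \<circ> ?g) has_derivative (\<lambda>t. t *\<^sub>R Sb C p w)) (at 0)"
    unfolding eq by (auto intro!: derivative_eq_intros)
  have "(\<lambda>t. L (t *\<^sub>R w)) = (\<lambda>t. t *\<^sub>R Sb C p w)"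
    using has_derivative_unique[OF d1 d2] .
  then show ?thesis by (metis scaleR_one)
qed

lemma lin_add: "lin_form a (u + v) = lin_form a u + lin_form a v"
  by (simp add: lin_form_def sum_3 algebra_simps)
lemma lin_smult: "lin_form a (c *s u) = c * lin_form a u"
  by (simp add: lin_form_def sum_3 algebra_simps)

lemma prop_lemma:
  assumes "u \<noteq> 0" "v \<noteq> 0" "x *s u + y *s v = 0" "x \<noteq> 0 \<or> y \<noteq> 0"
  shows "proj_eq u v"
proof -
  have y: "y \<noteq> 0"
  proof
    assume "y = 0"
    then have "x *s u = 0" using assms(3) by simp
    then have "x = 0" using assms(1) by (simp add: vec_eq_iff) (metis)
    with \<open>y = 0\<close> assms(4) show False by simp
  qed
  have x: "x \<noteq> 0"
  proof
    assume "x = 0"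
    then have "y *s v = 0" using assms(3) by simp
    then show False using assms(2) y by (simp add: vec_eq_iff)
  qed
  have "v = (- x / y) *s u"
    using assms(3) y by (simp add: vec_eq_iff field_simps) (metis add_eq_0_iff)
  moreover have "- x / y \<noteq> 0" using x y by simp
  ultimately show ?thesis unfolding proj_eq_def by blast
qed

lemma span3:
  assumes "b \<noteq> 0" "lin_form b p = 0" "lin_form b q = 0" "lin_form b r = 0"
  shows "\<exists>c1 c2 c3. c1 *s p + c2 *s q + c3 *s r = 0 \<and> (c1 \<noteq> 0 \<or> c2 \<noteq> 0 \<or> c3 \<noteq> 0)"
proof -
  define R :: "complex^3^3" where "R = (\<chi> i. if i = 1 then p else if i = 2 then q else r)"
  have "R *v b = 0"
    using assms(2-4) unfolding R_def lin_form_def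
    by (simp add: vec_eq_iff matrix_vector_mult_def sum_3 mult.commute)
  then have "\<not> (\<exists>B. B ** R = mat 1)" using assms(1) matrix_left_invertible_ker by blast
  then have "\<not> (\<exists>B. R ** B = mat 1)" by (metis invertible_left_inverse invertible_right_inverse)
  then obtain c where c: "sum (\<lambda>i::3. c i *s row i R) UNIV = 0" and ci: "\<exists>i. c i \<noteq> 0"
    unfolding matrix_right_invertible_independent_rows by blast
  have "c 1 *s p + c 2 *s q + c 3 *s r = 0"
    using c by (simp add: sum_3 R_def row_def)
  moreover have "c 1 \<noteq> 0 \<or> c 2 \<noteq> 0 \<or> c 3 \<noteq> 0" using ci by (metis exhaust_3)
  ultimately show ?thesis by blast
qed

theorem mainTheorem7:
  fixes C :: "3 \<Rightarrow> 3 \<Rightarrow> 3 \<Rightarrow> complex" and a p q r :: "complex^3"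
  assumes "holo_quad C"
    and "invariant_line C a"
    and "\<forall>v. is_fixed C v \<longrightarrow> simple_fixed C v"
    and "is_fixed C p" and "is_fixed C q" and "is_fixed C r"
    and "lin_form a p \<noteq> 0" and "lin_form a q \<noteq> 0" and "lin_form a r \<noteq> 0"
    and "\<not> proj_eq p q" and "\<not> proj_eq p r" and "\<not> proj_eq q r"
  shows "\<not> proj_collinear p q r"
proof
  assume "proj_collinear p q r"
  then obtain b where b: "b \<noteq> 0" "lin_form b p = 0" "lin_form b q = 0" "lin_form b r = 0"
    unfolding proj_collinear_def by blast
  have p0: "p \<noteq> 0" and q0: "q \<noteq> 0" and r0: "r \<noteq> 0"
    using assms(4-6) unfolding is_fixed_def by auto
  obtain mp where mp: "quad_map C p = mp *s p" using assms(4) unfolding is_fixed_def by blast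
  obtain mq where mq: "quad_map C q = mq *s q" using assms(5) unfolding is_fixed_def by blast
  obtain mr where mr: "quad_map C r = mr *s r" using assms(6) unfolding is_fixed_def by blast
  have mp0: "mp \<noteq> 0" using assms(1) p0 mp unfolding holo_quad_def by force
  have mq0: "mq \<noteq> 0" using assms(1) q0 mq unfolding holo_quad_def by force
  obtain c1 c2 c3 where c: "c1 *s p + c2 *s q + c3 *s r = 0" and cnz: "c1 \<noteq> 0 \<or> c2 \<noteq> 0 \<or> c3 \<noteq> 0"
    using span3[OF b] by blast
  have c3: "c3 \<noteq> 0"
  proof
    assume "c3 = 0"
    then have "c1 *s p + c2 *s q = 0" "c1 \<noteq> 0 \<or> c2 \<noteq> 0" using c cnz by auto
    then show False using prop_lemma[OF p0 q0] assms(10) by blast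
  qed
  have c1: "c1 \<noteq> 0"
  proof
    assume "c1 = 0"
    then have "c2 *s q + c3 *s r = 0" using c by auto
    then show False using prop_lemma[OF q0 r0] assms(12) c3 by blast
  qed
  have c2: "c2 \<noteq> 0"
  proof
    assume "c2 = 0"
    then have "c1 *s p + c3 *s r = 0" using c by auto
    then show False using prop_lemma[OF p0 r0] assms(11) c3 by blast
  qed
  define al where "al = - c1 / c3"
  define be where "be = - c2 / c3"
  have al0: "al \<noteq> 0" and be0: "be \<noteq> 0" using c1 c2 c3 by (auto simp: al_def be_def)
  have rdef: "r = al *s p + be *s q"
    using c c3 unfolding al_def be_def
    by (simp add: vec_eq_iff field_simps) (metis add_eq_0_iff add.commute add.left_commute)
  define S where "S = Sb C p q"
  define d1 where "d1 = (mr - al * mp) / be"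
  define d2 where "d2 = (mr - be * mq) / al"
  have QR: "(al * al) *s (mp *s p) + (al * be) *s S + (be * be) *s (mq *s q) = mr *s (al *s p + be *s q)"
    using mr Q_comb[of C al p be q] mp mq unfolding S_def rdef[symmetric] by simp
  have Sdef: "S = d1 *s p + d2 *s q"
  proof -
    { fix i
      have "(al * al) * (mp * p$i) + (al * be) * S$i + (be * be) * (mq * q$i) = mr * (al * p$i + be * q$i)"
        using QR by (simp add: vec_eq_iff algebra_simps)
      then have "S$i = d1 * p$i + d2 * q$i"
        unfolding d1_def d2_def using al0 be0
        by (simp add: field_simps)
    }
    then show ?thesis by (simp add: vec_eq_iff)
  qed
  define A where "A = lin_form a q"
  define P where "P = lin_form a p"
  have A0: "A \<noteq> 0" and P0: "P \<noteq> 0" using assms(7,8) by (auto simp: A_def P_def)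
  define w where "w = A *s p + (- P) *s q"
  have aw: "lin_form a w = 0" unfolding w_def lin_add lin_smult by (simp add: A_def P_def)
  have w0: "w \<noteq> 0"
  proof
    assume "w = 0"
    then show False using prop_lemma[OF p0 q0, of A "- P"] A0 assms(10) unfolding w_def by blast
  qed
  have "lin_form a (quad_map C w) = 0"
    using assms(2) aw w0 unfolding invariant_line_def by blast
  then have "lin_form a ((A * A) *s (mp *s p) + (A * - P) *s (d1 *s p + d2 *s q) + (- P * - P) *s (mq *s q)) = 0"
    using Q_comb[of C A p "- P" q] mp mq unfolding w_def S_def[symmetric] Sdef by simp
  then have E0: "A * A * mp * P + (A * - P) * (d1 * P + d2 * A) + P * P * mq * A = 0"
    unfolding lin_add lin_smult P_def[symmetric] A_def[symmetric] by (simp add: algebra_simps)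
  have E1: "A * (mp - d2) + P * (mq - d1) = 0"
  proof -
    have "(A * P) * (A * (mp - d2) + P * (mq - d1)) = 0" using E0 by (simp add: algebra_simps)
    then show ?thesis using A0 P0 by simp
  qed
  have E2: "al * (mp - d2) - be * (mq - d1) = 0"
    unfolding d1_def d2_def using al0 be0 by (simp add: field_simps)
  have ar: "al * P + be * A \<noteq> 0"
    using assms(9) unfolding rdef by (simp add: lin_add lin_smult A_def P_def)
  have X: "mp - d2 = 0"
  proof -
    have "(mp - d2) * (al * P + be * A) = be * (A * (mp - d2) + P * (mq - d1)) + P * (al * (mp - d2) - be * (mq - d1))"
      by (simp add: algebra_simps)
    then have "(mp - d2) * (al * P + be * A) = 0" using E1 E2 by simp
    then show ?thesis using ar by simp
  qed
  have Y: "mq - d1 = 0" using E1 X P0 by simp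
  have Sfin: "Sb C p q = mq *s p + mp *s q" using Sdef X Y unfolding S_def by simp
  obtain L mu where L: "(quad_map C has_derivative L) (at p)" "quad_map C p = mu *s p"
      "\<forall>w. L w = mu *s w \<longrightarrow> w = 0"
    using assms(3,4) unfolding simple_fixed_def by blast
  have "mu = mp"
  proof -
    obtain i where "p $ i \<noteq> 0" using p0 by (metis vec_eq_iff zero_index)
    moreover have "mu * p$i = mp * p$i" using L(2) mp by (metis vector_smult_component)
    ultimately show ?thesis by simp
  qed
  define w' where "w' = mq *s p + (- mp) *s q"
  have w'0: "w' \<noteq> 0"
  proof
    assume "w' = 0"
    then show False using prop_lemma[OF p0 q0, of mq "- mp"] mp0 assms(10) unfolding w'_def by auto
  qed
  have "L w' = Sb C p w'" using dir_deriv[OF L(1)] .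
  also have "\<dots> = mq *s Sb C p p + (- mp) *s Sb C p q" unfolding w'_def by (rule Sb_lin)
  also have "\<dots> = mp *s w'"
    unfolding Sb_self Sfin mp w'_def by (simp add: vec_eq_iff algebra_simps)
  finally have "L w' = mu *s w'" using \<open>mu = mp\<close> by simp
  then show False using L(3) w'0 by blast
qed

end
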